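(* Suppose $(A,W)$ is a $T_1$ Pratt comonoid which is generated by a countably infinite family $S$ of subsets of $A$ that satisfy no nontrivial distributive lattice relations (i.e., $S$ is a set of free generators of a free distributive lattice). Then $W$ has at least continuum cardinality, and in fact $W$ contains a complete sublattice isomorphic to the lattice of all subsets of $\omega$.
   Context: A Pratt comonoid is a pair $(A,W)$ where $A$ is a set and $W$ is a set of subsets of $A$ such that (i) $\emptyset\in W$ and $A\in W$; (ii) whenever $C\subseteq A\times A$ is such that for every $a\in A$ both the $a$-th row $\{b\mid (a,b)\in C\}$ and the $a$-th column $\{b\mid (b,a)\in C\}$ belong to $W$ (a crossword over $W$), the diagonal $\{b\mid (b,b)\in C\}$ also belongs to $W$. $(A,W)$ is $T_1$ if for all distinct $a,b\in A$ some member of $W$ contains $a$ but not $b$. $(A,W)$ is generated by a family $S$ of subsets of $A$ if $W$ is the least Pratt comonoid structure on $A$ containing $S$ (Pratt comonoid structures on $A$ are closed under arbitrary intersections). A complete sublattice of $W$ is a subset of $W$ closed under arbitrary (possibly infinite) unions and intersections taken in the power set of $A$, not necessarily containing $\emptyset$ or $A$. *)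

theory Defs
  imports Complex_Main "HOL-Library.Countable_Set"
begin

definition crossword :: "'a set \<Rightarrow> 'a set set \<Rightarrow> ('a \<times> 'a) set \<Rightarrow> bool" where
  "crossword A W C \<longleftrightarrow> C \<subseteq> A \<times> A \<and>
     (\<forall>a\<in>A. {b. (a, b) \<in> C} \<in> W \<and> {b. (b, a) \<in> C} \<in> W)"

definition pratt_comonoid :: "'a set \<Rightarrow> 'a set set \<Rightarrow> bool" where
  "pratt_comonoid A W \<longleftrightarrow> W \<subseteq> Pow A \<and> {} \<in> W \<and> A \<in> W \<and>
     (\<forall>C. crossword A W C \<longrightarrow> {b. (b, b) \<in> C} \<in> W)"

definition pratt_T1 :: "'a set \<Rightarrow> 'a set set \<Rightarrow> bool" where
  "pratt_T1 A W \<longleftrightarrow> (\<forall>a\<in>A. \<forall>b\<in>A. a \<noteq> b \<longrightarrow> (\<exists>U\<in>W. a \<in> U \<and> b \<notin> U))"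

definition pratt_generated_by :: "'a set \<Rightarrow> 'a set set \<Rightarrow> 'a set set \<Rightarrow> bool" where
  "pratt_generated_by A W S \<longleftrightarrow> S \<subseteq> Pow A \<and>
     W = \<Inter> {W'. pratt_comonoid A W' \<and> S \<subseteq> W'}"

datatype 'v lterm = LVar 'v | LMeet "'v lterm" "'v lterm" | LJoin "'v lterm" "'v lterm"

fun lt_vars :: "'v lterm \<Rightarrow> 'v set" where
  "lt_vars (LVar v) = {v}"
| "lt_vars (LMeet p q) = lt_vars p \<union> lt_vars q"
| "lt_vars (LJoin p q) = lt_vars p \<union> lt_vars q"

fun lt_eval :: "'a set lterm \<Rightarrow> 'a set" where
  "lt_eval (LVar X) = X"
| "lt_eval (LMeet p q) = lt_eval p \<inter> lt_eval q"
| "lt_eval (LJoin p q) = lt_eval p \<union> lt_eval q"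

text \<open>Equational derivability from the axioms of distributive lattices
  (the congruence whose quotient of the term algebra is the free distributive lattice).\<close>
inductive dl_eq :: "'v lterm \<Rightarrow> 'v lterm \<Rightarrow> bool" where
  refl: "dl_eq p p"
| sym: "dl_eq p q \<Longrightarrow> dl_eq q p"
| trans: "dl_eq p q \<Longrightarrow> dl_eq q r \<Longrightarrow> dl_eq p r"
| cong_meet: "dl_eq p p' \<Longrightarrow> dl_eq q q' \<Longrightarrow> dl_eq (LMeet p q) (LMeet p' q')"
| cong_join: "dl_eq p p' \<Longrightarrow> dl_eq q q' \<Longrightarrow> dl_eq (LJoin p q) (LJoin p' q')"
| meet_assoc: "dl_eq (LMeet (LMeet p q) r) (LMeet p (LMeet q r))"
| join_assoc: "dl_eq (LJoin (LJoin p q) r) (LJoin p (LJoin q r))"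
| meet_comm: "dl_eq (LMeet p q) (LMeet q p)"
| join_comm: "dl_eq (LJoin p q) (LJoin q p)"
| meet_absorb: "dl_eq (LMeet p (LJoin p q)) p"
| join_absorb: "dl_eq (LJoin p (LMeet p q)) p"
| distrib: "dl_eq (LMeet p (LJoin q r)) (LJoin (LMeet p q) (LMeet p r))"

text \<open>S satisfies no nontrivial distributive lattice relations: every lattice identity
  between terms in elements of S that holds in the power set is a distributive lattice law,
  i.e. S freely generates the sublattice it generates.\<close>
definition free_dl_generators :: "'a set set \<Rightarrow> bool" where
  "free_dl_generators S \<longleftrightarrow>
     (\<forall>p q. lt_vars p \<subseteq> S \<longrightarrow> lt_vars q \<subseteq> S \<longrightarrow> lt_eval p = lt_eval q \<longrightarrow> dl_eq p q)"

definition complete_sublattice :: "'a set set \<Rightarrow> 'a set set \<Rightarrow> bool" where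
  "complete_sublattice W L \<longleftrightarrow> L \<subseteq> W \<and>
     (\<forall>F. F \<subseteq> L \<and> F \<noteq> {} \<longrightarrow> \<Union>F \<in> L \<and> \<Inter>F \<in> L)"

end

theory Submission
  imports Defs
begin


fun mkm :: "'v list \<Rightarrow> 'v lterm" where
  "mkm [] = undefined"
| "mkm [x] = LVar x"
| "mkm (x#y#zs) = LMeet (LVar x) (mkm (y#zs))"

fun mkj :: "'v list \<Rightarrow> 'v lterm" where
  "mkj [] = undefined"
| "mkj [x] = LVar x"
| "mkj (x#y#zs) = LJoin (LVar x) (mkj (y#zs))"

fun bev :: "('v \<Rightarrow> bool) \<Rightarrow> 'v lterm \<Rightarrow> bool" where
  "bev f (LVar v) = f v"
| "bev f (LMeet p q) = (bev f p \<and> bev f q)"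
| "bev f (LJoin p q) = (bev f p \<or> bev f q)"

lemma mkm_props: "xs \<noteq> [] \<Longrightarrow> lt_vars (mkm xs) = set xs \<and> lt_eval (mkm xs) = \<Inter>(set xs)
   \<and> bev f (mkm xs) = (\<forall>x\<in>set xs. f x)"
  by (induction xs rule: mkm.induct) auto

lemma mkj_props: "xs \<noteq> [] \<Longrightarrow> lt_vars (mkj xs) = set xs \<and> lt_eval (mkj xs) = \<Union>(set xs)
   \<and> bev f (mkj xs) = (\<exists>x\<in>set xs. f x)"
  by (induction xs rule: mkj.induct) auto

lemma dl_eq_sound: "dl_eq p q \<Longrightarrow> bev f p = bev f q"
  by (induction rule: dl_eq.induct) auto

lemma indep:
  assumes "free_dl_generators S" "set ps \<subseteq> S" "set qs \<subseteq> S" "ps \<noteq> []" "qs \<noteq> []"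
    "set ps \<inter> set qs = {}"
  shows "\<exists>x. (\<forall>s\<in>set ps. x \<in> s) \<and> (\<forall>s\<in>set qs. x \<notin> s)"
proof (rule ccontr)
  assume "\<not> ?thesis"
  hence sub: "\<Inter>(set ps) \<subseteq> \<Union>(set qs)" by blast
  let ?p = "LMeet (mkm ps) (mkj qs)" and ?q = "mkm ps"
  have "lt_eval ?p = lt_eval ?q" using sub mkm_props[OF assms(4)] mkj_props[OF assms(5)] by auto
  moreover have "lt_vars ?p \<subseteq> S" "lt_vars ?q \<subseteq> S"
    using mkm_props[OF assms(4)] mkj_props[OF assms(5)] assms(2,3) by auto
  ultimately have "dl_eq ?p ?q" using assms(1) unfolding free_dl_generators_def by blast
  hence "bev (\<lambda>s. s \<in> set ps) ?p = bev (\<lambda>s. s \<in> set ps) ?q" by (rule dl_eq_sound)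
  moreover have "bev (\<lambda>s. s \<in> set ps) ?q"
    using mkm_props[OF assms(4), of "\<lambda>s. s \<in> set ps"] by simp
  moreover have "\<not> bev (\<lambda>s. s \<in> set ps) (mkj qs)"
    using mkj_props[OF assms(5), of "\<lambda>s. s \<in> set ps"] assms(6) by auto
  ultimately show False by simp
qed

lemma pc_union:
  assumes pc: "pratt_comonoid A W" and U: "U \<in> W" and V: "V \<in> W"
  shows "U \<union> V \<in> W"
proof -
  have sub: "U \<subseteq> A" "V \<subseteq> A" using pc U V unfolding pratt_comonoid_def by auto
  have AW: "A \<in> W" using pc unfolding pratt_comonoid_def by auto
  let ?C = "(U \<times> A) \<union> (A \<times> V)"
  have "crossword A W ?C"
    unfolding crossword_def
  proof (intro conjI ballI)
    show "?C \<subseteq> A \<times> A" using sub by auto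
  next
    fix a assume a: "a \<in> A"
    have "{b. (a, b) \<in> ?C} = (if a \<in> U then A else V)" using a sub by auto
    thus "{b. (a, b) \<in> ?C} \<in> W" using AW V by simp
    have "{b. (b, a) \<in> ?C} = (if a \<in> V then A else U)" using a sub by auto
    thus "{b. (b, a) \<in> ?C} \<in> W" using AW U by simp
  qed
  hence "{b. (b, b) \<in> ?C} \<in> W" using pc unfolding pratt_comonoid_def by blast
  moreover have "{b. (b, b) \<in> ?C} = U \<union> V" using sub by auto
  ultimately show ?thesis by simp
qed

lemma pc_inter:
  assumes pc: "pratt_comonoid A W" and U: "U \<in> W" and V: "V \<in> W"
  shows "U \<inter> V \<in> W"
proof -
  have sub: "U \<subseteq> A" "V \<subseteq> A" using pc U V unfolding pratt_comonoid_def by auto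
  have EW: "{} \<in> W" using pc unfolding pratt_comonoid_def by auto
  let ?C = "U \<times> V"
  have "crossword A W ?C"
    unfolding crossword_def
  proof (intro conjI ballI)
    show "?C \<subseteq> A \<times> A" using sub by auto
  next
    fix a assume a: "a \<in> A"
    have "{b. (a, b) \<in> ?C} = (if a \<in> U then V else {})" by auto
    thus "{b. (a, b) \<in> ?C} \<in> W" using EW V by simp
    have "{b. (b, a) \<in> ?C} = (if a \<in> V then U else {})" by auto
    thus "{b. (b, a) \<in> ?C} \<in> W" using EW U by simp
  qed
  hence "{b. (b, b) \<in> ?C} \<in> W" using pc unfolding pratt_comonoid_def by blast
  moreover have "{b. (b, b) \<in> ?C} = U \<inter> V" by auto
  ultimately show ?thesis by simp
qed

lemma antichain:
  assumes T1: "pratt_T1 A W" and gen: "pratt_generated_by A W S"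
    and p: "p \<in> A" and q: "q \<in> A" and pq: "p \<noteq> q"
  shows "\<exists>s\<in>S. p \<in> s \<and> q \<notin> s"
proof -
  define Up where "Up = {U. U \<subseteq> A \<and> (\<forall>x\<in>U. \<forall>y\<in>A. (\<forall>s\<in>S. x \<in> s \<longrightarrow> y \<in> s) \<longrightarrow> y \<in> U)}"
  have SA: "S \<subseteq> Pow A" using gen unfolding pratt_generated_by_def by auto
  have "pratt_comonoid A Up"
    unfolding pratt_comonoid_def
  proof (intro conjI allI impI)
    show "Up \<subseteq> Pow A" unfolding Up_def by auto
    show "{} \<in> Up" unfolding Up_def by auto
    show "A \<in> Up" unfolding Up_def by auto
    fix C assume cw: "crossword A Up C"
    have CA: "C \<subseteq> A \<times> A" and rows: "\<And>a. a \<in> A \<Longrightarrow> {b. (a, b) \<in> C} \<in> Up"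
      and cols: "\<And>a. a \<in> A \<Longrightarrow> {b. (b, a) \<in> C} \<in> Up"
      using cw unfolding crossword_def by auto
    show "{b. (b, b) \<in> C} \<in> Up"
      unfolding Up_def
    proof (intro CollectI conjI ballI impI)
      show "{b. (b, b) \<in> C} \<subseteq> A" using CA by auto
      fix x y assume x: "x \<in> {b. (b, b) \<in> C}" and y: "y \<in> A"
        and le: "\<forall>s\<in>S. x \<in> s \<longrightarrow> y \<in> s"
      have xA: "x \<in> A" using x CA by auto
      have r: "\<forall>z\<in>{b. (x, b) \<in> C}. \<forall>w\<in>A. (\<forall>s\<in>S. z \<in> s \<longrightarrow> w \<in> s) \<longrightarrow> w \<in> {b. (x, b) \<in> C}"
        using rows[OF xA] unfolding Up_def by blast
      have "(x, y) \<in> C" using r x y le by blast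
      have c: "\<forall>z\<in>{b. (b, y) \<in> C}. \<forall>w\<in>A. (\<forall>s\<in>S. z \<in> s \<longrightarrow> w \<in> s) \<longrightarrow> w \<in> {b. (b, y) \<in> C}"
        using cols[OF y] unfolding Up_def by blast
      have "y \<in> {b. (b, y) \<in> C}" using c \<open>(x, y) \<in> C\<close> y le by blast
      thus "(y, y) \<in> C" by simp
    qed
  qed
  moreover have "S \<subseteq> Up" using SA unfolding Up_def by auto
  ultimately have "Up \<in> {W'. pratt_comonoid A W' \<and> S \<subseteq> W'}" by simp
  hence "W \<subseteq> Up" using gen unfolding pratt_generated_by_def by (simp add: Inter_lower)
  moreover obtain U where U: "U \<in> W" "p \<in> U" "q \<notin> U" using T1 p q pq unfolding pratt_T1_def by blast
  ultimately have "U \<in> Up" by blast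
  hence "\<forall>x\<in>U. \<forall>y\<in>A. (\<forall>s\<in>S. x \<in> s \<longrightarrow> y \<in> s) \<longrightarrow> y \<in> U" unfolding Up_def by blast
  hence "\<not> (\<forall>s\<in>S. p \<in> s \<longrightarrow> q \<in> s)" using U q by blast
  thus ?thesis by blast
qed



lemma comparison:
  assumes pc: "pratt_comonoid A W"
    and Fin: "\<And>k. F k \<in> W" and Fmono: "\<And>k k'. k \<le> k' \<Longrightarrow> F k \<subseteq> F k'"
    and Gin: "\<And>k. G k \<in> W" and Ganti: "\<And>k k'. k \<le> k' \<Longrightarrow> G k' \<subseteq> G k" and G0: "G 0 = A"
    and Gempty: "\<And>x. x \<in> A \<Longrightarrow> \<exists>k. x \<notin> G k"
    and ff: "\<And>x. ff x = (LEAST k. x \<in> F k)"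
    and gg: "\<And>x. gg x = (LEAST k. x \<notin> G (Suc k))"
  shows "{x \<in> A. (\<exists>k. x \<in> F k) \<and> (ff x < gg x \<or> (ff x = gg x \<and> ff x \<in> X))} \<in> W"
proof -
  have WA: "W \<subseteq> Pow A" and EW: "{} \<in> W" using pc unfolding pratt_comonoid_def by auto
  have FA: "F k \<subseteq> A" for k using subsetD[OF WA Fin[of k]] by simp
  have GA: "G k \<subseteq> A" for k using subsetD[OF WA Gin[of k]] by simp
  have ffF: "x \<in> F k \<longleftrightarrow> ff x \<le> k" if ex: "\<exists>k. x \<in> F k" for x k
  proof
    assume "x \<in> F k" thus "ff x \<le> k" unfolding ff by (rule Least_le)
  next
    assume le: "ff x \<le> k"
    from ex obtain k0 where "x \<in> F k0" by blast
    hence "x \<in> F (ff x)" unfolding ff by (rule LeastI)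
    thus "x \<in> F k" using Fmono[OF le] by blast
  qed
  have ggG: "x \<in> G j \<longleftrightarrow> j \<le> gg x" if xA: "x \<in> A" for x j
  proof -
    obtain k where k: "x \<notin> G k" using Gempty[OF xA] by blast
    have "k \<noteq> 0" using k xA G0 by (metis)
    then obtain k' where "k = Suc k'" by (cases k) auto
    hence ex: "\<exists>k. x \<notin> G (Suc k)" using k by blast
    have out: "x \<notin> G (Suc (gg x))" unfolding gg by (rule LeastI_ex[OF ex])
    show ?thesis
    proof
      assume xG: "x \<in> G j"
      show "j \<le> gg x"
      proof (rule ccontr)
        assume "\<not> j \<le> gg x"
        hence "Suc (gg x) \<le> j" by simp
        thus False using Ganti xG out by blast
      qed
    next
      assume le: "j \<le> gg x"
      show "x \<in> G j"
      proof (cases j)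
        case 0 thus ?thesis using xA G0 by simp
      next
        case (Suc i)
        hence "i < gg x" using le by simp
        hence "\<not> (x \<notin> G (Suc i))" unfolding gg by (rule not_less_Least)
        thus ?thesis using Suc by simp
      qed
    qed
  qed
  define C where "C = {(x,y). y \<in> A \<and> (\<exists>k. x \<in> F k) \<and> (ff x < gg y \<or> (ff x = gg y \<and> ff x \<in> X))}"
  have "crossword A W C"
    unfolding crossword_def
  proof (intro conjI ballI)
    show "C \<subseteq> A \<times> A" unfolding C_def using FA by auto
  next
    fix a assume a: "a \<in> A"
    show "{b. (a, b) \<in> C} \<in> W"
    proof (cases "\<exists>k. a \<in> F k")
      case True
      have "{b. (a, b) \<in> C} = (if ff a \<in> X then G (ff a) else G (Suc (ff a)))"
      proof (intro set_eqI)
        fix b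
        have "b \<in> G m \<longleftrightarrow> b \<in> A \<and> m \<le> gg b" for m using ggG[of b] GA by blast
        thus "b \<in> {b. (a, b) \<in> C} \<longleftrightarrow> b \<in> (if ff a \<in> X then G (ff a) else G (Suc (ff a)))"
          unfolding C_def using True by auto
      qed
      thus ?thesis using Gin by simp
    next
      case False
      hence "{b. (a, b) \<in> C} = {}" unfolding C_def by auto
      thus ?thesis using EW by simp
    qed
    have key: "b \<in> F k \<longleftrightarrow> (\<exists>k. b \<in> F k) \<and> ff b \<le> k" for b k using ffF by blast
    have col: "{b. (b, a) \<in> C} = {b. (\<exists>k. b \<in> F k) \<and> (ff b < gg a \<or> (ff b = gg a \<and> ff b \<in> X))}"
      unfolding C_def using a by auto
    have "{b. (b, a) \<in> C} = (if gg a \<in> X then F (gg a) else if gg a = 0 then {} else F (gg a - 1))"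
    proof (cases "gg a \<in> X")
      case True
      show ?thesis unfolding col
      proof (intro set_eqI)
        fix b show "b \<in> {b. (\<exists>k. b \<in> F k) \<and> (ff b < gg a \<or> ff b = gg a \<and> ff b \<in> X)} \<longleftrightarrow>
            b \<in> (if gg a \<in> X then F (gg a) else if gg a = 0 then {} else F (gg a - 1))"
          using key[of b "gg a"] True by auto
      qed
    next
      case False
      show ?thesis
      proof (cases "gg a = 0")
        case True thus ?thesis unfolding col using False by auto
      next
        case nz: False
        show ?thesis unfolding col
        proof (intro set_eqI)
          fix b show "b \<in> {b. (\<exists>k. b \<in> F k) \<and> (ff b < gg a \<or> ff b = gg a \<and> ff b \<in> X)} \<longleftrightarrow>
            b \<in> (if gg a \<in> X then F (gg a) else if gg a = 0 then {} else F (gg a - 1))"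
          using key[of b "gg a - 1"] False nz by auto
        qed
      qed
    qed
    thus "{b. (b, a) \<in> C} \<in> W" using Fin EW by simp
  qed
  hence "{b. (b, b) \<in> C} \<in> W" using pc unfolding pratt_comonoid_def by blast
  moreover have "{b. (b, b) \<in> C} = {x \<in> A. (\<exists>k. x \<in> F k) \<and> (ff x < gg x \<or> (ff x = gg x \<and> ff x \<in> X))}"
    unfolding C_def by auto
  ultimately show ?thesis by simp
qed



lemma infinite_odd: "infinite {n::nat. odd n}"
  unfolding infinite_nat_iff_unbounded
proof
  fix m :: nat show "\<exists>n>m. n \<in> {n. odd n}" by (intro exI[of _ "2*m+1"]) auto
qed

lemma infinite_even: "infinite {n::nat. even n}"
  unfolding infinite_nat_iff_unbounded
proof
  fix m :: nat show "\<exists>n>m. n \<in> {n. even n}" by (intro exI[of _ "2*m+2"]) auto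
qed

lemma real_to_natset_inj: "inj (\<lambda>r::real. to_nat ` {q::rat. of_rat q < r})"
proof (rule injI)
  fix r s :: real assume eq: "to_nat ` {q::rat. of_rat q < r} = to_nat ` {q::rat. of_rat q < s}"
  show "r = s"
  proof (rule ccontr)
    assume "r \<noteq> s"
    hence "r < s \<or> s < r" by linarith
    thus False
    proof
      assume "r < s"
      then obtain q :: rat where q: "r < of_rat q" "of_rat q < s" using of_rat_dense by blast
      hence "to_nat q \<in> to_nat ` {q::rat. of_rat q < r}" using eq by auto
      then obtain q' :: rat where "of_rat q' < r" "to_nat q = to_nat q'" by auto
      hence "q = q'" by simp
      thus False using q \<open>of_rat q' < r\<close> by simp
    next
      assume "s < r"
      then obtain q :: rat where q: "s < of_rat q" "of_rat q < r" using of_rat_dense by blast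
      hence "to_nat q \<in> to_nat ` {q::rat. of_rat q < s}" using eq by auto
      then obtain q' :: rat where "of_rat q' < s" "to_nat q = to_nat q'" by auto
      hence "q = q'" by simp
      thus False using q \<open>of_rat q' < s\<close> by simp
    qed
  qed
qed

theorem theorem7p10:
  fixes A :: "'a set" and W S :: "'a set set"
  assumes "pratt_comonoid A W"
    and "pratt_T1 A W"
    and "pratt_generated_by A W S"
    and "countable S" and "infinite S"
    and "free_dl_generators S"
  shows "(\<exists>f :: real \<Rightarrow> 'a set. inj f \<and> range f \<subseteq> W)
       \<and> (\<exists>L. complete_sublattice W L \<and>
              (\<exists>h :: nat set \<Rightarrow> 'a set. bij_betw h UNIV L \<and> (\<forall>X Y. X \<subseteq> Y \<longleftrightarrow> h X \<subseteq> h Y)))"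
proof -
  note pc = assms(1) and T1 = assms(2) and gen = assms(3) and free = assms(6)
  have SA: "S \<subseteq> Pow A" and Wdef: "W = \<Inter> {W'. pratt_comonoid A W' \<and> S \<subseteq> W'}"
    using gen unfolding pratt_generated_by_def by auto
  have SW: "S \<subseteq> W" unfolding Wdef by (rule Inter_greatest) blast
  have WA: "W \<subseteq> Pow A" and EW: "{} \<in> W" and AW: "A \<in> W" using pc unfolding pratt_comonoid_def by auto
  define e where "e = from_nat_into S"
  have bij_e: "bij_betw e UNIV S" unfolding e_def by (rule bij_betw_from_nat_into[OF assms(4,5)])
  have eS: "e n \<in> S" for n using bij_e unfolding bij_betw_def by blast
  have inj_e: "e u = e v \<Longrightarrow> u = v" for u v using bij_e by (simp add: bij_betw_def inj_on_def)
  have surj_e: "s \<in> S \<Longrightarrow> \<exists>n. s = e n" for s using bij_e unfolding bij_betw_def by blast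
  have eA: "e n \<subseteq> A" for n using eS[of n] SA by blast
  have eW: "e n \<in> W" for n using eS[of n] SW by blast
  have infA: "infinite A"
  proof
    assume "finite A"
    hence "finite (Pow A)" by simp
    hence "finite S" using SA finite_subset by blast
    thus False using assms(5) by simp
  qed
  have ac: "p \<in> A \<Longrightarrow> q \<in> A \<Longrightarrow> p \<noteq> q \<Longrightarrow> \<exists>n. p \<in> e n \<and> q \<notin> e n" for p q
    using antichain[OF T1 gen, of p q] surj_e by metis
  have other: "\<exists>q\<in>A. q \<noteq> p" for p
  proof -
    have "A - {p} \<noteq> {}" using infA by (metis finite.emptyI finite_insert insert_Diff_single infinite_super subset_insertI)
    thus ?thesis by blast
  qed
  have "\<exists>p0\<in>A. infinite {n. p0 \<notin> e n}"
  proof (rule ccontr)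
    assume "\<not> ?thesis"
    hence finM: "\<And>p. p \<in> A \<Longrightarrow> finite {n. p \<notin> e n}" by blast
    obtain p where p: "p \<in> A" using infA by (metis finite.emptyI ex_in_conv)
    obtain q where q: "q \<in> A" "q \<noteq> p" using other[of p] by blast
    define G where "G = {n. p \<notin> e n} \<union> {n. q \<notin> e n}"
    have finG: "finite G" unfolding G_def using finM p q by simp
    obtain n0 where "q \<in> e n0" "p \<notin> e n0" using ac[OF q(1) p q(2)] by blast
    hence "G \<noteq> {}" unfolding G_def by blast
    obtain f where f: "f \<notin> G" using finG by (metis ex_new_if_finite infinite_UNIV_nat)
    define qs where "qs = map e (sorted_list_of_set G)"
    have setqs: "set qs = e ` G" unfolding qs_def using finG by simp
    have "\<exists>x. (\<forall>s\<in>set [e f]. x \<in> s) \<and> (\<forall>s\<in>set qs. x \<notin> s)"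
    proof (rule indep[OF free])
      show "set [e f] \<subseteq> S" using eS by simp
      show "set qs \<subseteq> S" using setqs eS by auto
      show "[e f] \<noteq> []" by simp
      show "qs \<noteq> []" using setqs \<open>G \<noteq> {}\<close> by auto
      show "set [e f] \<inter> set qs = {}" using setqs f inj_e by auto
    qed
    then obtain x where x1: "x \<in> e f" and x2: "\<And>n. n \<in> G \<Longrightarrow> x \<notin> e n" using setqs by auto
    have xA: "x \<in> A" using x1 eA by blast
    have "x = p"
    proof (rule ccontr)
      assume "x \<noteq> p"
      then obtain n where "x \<in> e n" "p \<notin> e n" using ac[OF xA p] by blast
      thus False using x2 unfolding G_def by blast
    qed
    moreover have "x = q"
    proof (rule ccontr)
      assume "x \<noteq> q"
      then obtain n where "x \<in> e n" "q \<notin> e n" using ac[OF xA q(1)] by blast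
      thus False using x2 unfolding G_def by blast
    qed
    ultimately show False using q(2) by simp
  qed
  then obtain p0 where p0: "p0 \<in> A" and infM0: "infinite {n. p0 \<notin> e n}" by blast
  define M0 where "M0 = {n. p0 \<notin> e n}"
  obtain m0 where m0: "m0 \<in> M0" using infM0 unfolding M0_def by (metis finite.emptyI ex_in_conv)
  define M' where "M' = M0 - {m0}"
  have infM': "infinite M'" unfolding M'_def M0_def using infM0 by simp
  define J where "J = (if infinite (M' \<inter> {n. even n}) then M' \<inter> {n. even n} else M' \<inter> {n. odd n})"
  have infJ: "infinite J"
  proof (cases "infinite (M' \<inter> {n. even n})")
    case True thus ?thesis unfolding J_def by simp
  next
    case False
    have "M' = (M' \<inter> {n. even n}) \<union> (M' \<inter> {n. odd n})" by auto
    hence "infinite (M' \<inter> {n. odd n})" using False infM' by (metis finite_UnI)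
    thus ?thesis unfolding J_def using False by simp
  qed
  have JM: "J \<subseteq> M'" unfolding J_def by auto
  define I where "I = - J"
  have infI: "infinite I"
  proof (cases "infinite (M' \<inter> {n. even n})")
    case True
    hence "{n. odd n} \<subseteq> I" unfolding I_def J_def by auto
    thus ?thesis using infinite_odd infinite_super by blast
  next
    case False
    hence "{n. even n} \<subseteq> I" unfolding I_def J_def by auto
    thus ?thesis using infinite_even infinite_super by blast
  qed
  have goodI: "\<exists>i\<in>I. q \<notin> e i" if q: "q \<in> A" for q
  proof (cases "q = p0")
    case True
    have "m0 \<in> I" unfolding I_def using JM M'_def by auto
    thus ?thesis using m0 True unfolding M0_def by blast
  next
    case False
    then obtain i where "p0 \<in> e i" "q \<notin> e i" using ac[OF p0 q] by metis
    moreover have "i \<in> I" unfolding I_def using JM \<open>p0 \<in> e i\<close> unfolding M'_def M0_def by auto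
    ultimately show ?thesis by blast
  qed
  define a where "a = enumerate I"
  define b where "b = enumerate J"
  have aI: "a k \<in> I" for k unfolding a_def using enumerate_in_set[OF infI] .
  have bJ: "b k \<in> J" for k unfolding b_def using enumerate_in_set[OF infJ] .
  have amono: "i < k \<Longrightarrow> a i < a k" for i k unfolding a_def using enumerate_mono[OF _ infI] by blast
  have bmono: "i < k \<Longrightarrow> b i < b k" for i k unfolding b_def using enumerate_mono[OF _ infJ] by blast
  have asurj: "i \<in> I \<Longrightarrow> \<exists>k. i = a k" for i
    using bij_enumerate[OF infI] unfolding a_def bij_betw_def by blast
  have ab: "a i \<noteq> b j" for i j using aI[of i] bJ[of j] unfolding I_def by auto
  define P where "P k = e (a k)" for k
  define Q where "Q k = e (b k)" for k
  define F where "F k = (\<Union>i\<in>{..k}. Q i)" for k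
  define G where "G k = A \<inter> (\<Inter>i\<in>{..<k}. P i)" for k
  have Fin: "F k \<in> W" for k
  proof (induction k)
    case 0 thus ?case unfolding F_def Q_def using eW by simp
  next
    case (Suc k)
    have "F (Suc k) = F k \<union> Q (Suc k)" unfolding F_def by (auto simp: atMost_Suc)
    thus ?case using pc_union[OF pc Suc.IH eW[of "b (Suc k)"]] unfolding Q_def by simp
  qed
  have Gin: "G k \<in> W" for k
  proof (induction k)
    case 0 thus ?case unfolding G_def using AW by simp
  next
    case (Suc k)
    have "G (Suc k) = G k \<inter> P k" unfolding G_def by (auto simp: lessThan_Suc)
    thus ?case using pc_inter[OF pc Suc.IH eW[of "a k"]] unfolding P_def by simp
  qed
  have Fmono: "k \<le> k' \<Longrightarrow> F k \<subseteq> F k'" for k k' unfolding F_def by (rule UN_mono) auto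
  have Ganti: "k \<le> k' \<Longrightarrow> G k' \<subseteq> G k" for k k' unfolding G_def by (auto dest: order.strict_trans2)
  have G0: "G 0 = A" unfolding G_def by simp
  have Gempty: "\<exists>k. x \<notin> G k" if x: "x \<in> A" for x
  proof -
    obtain i where i: "i \<in> I" "x \<notin> e i" using goodI[OF x] by blast
    obtain k where "i = a k" using asurj[OF i(1)] by blast
    hence "x \<notin> G (Suc k)" unfolding G_def P_def using i(2) by auto
    thus ?thesis by blast
  qed
  define ff where "ff x = (LEAST k. x \<in> F k)" for x
  define gg where "gg x = (LEAST k. x \<notin> G (Suc k))" for x
  define h where "h X = {x \<in> A. (\<exists>k. x \<in> F k) \<and> (ff x < gg x \<or> (ff x = gg x \<and> ff x \<in> X))}" for X
  have hW: "h X \<in> W" for X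
    unfolding h_def by (rule comparison[OF pc Fin Fmono Gin Ganti G0 Gempty]) (simp_all add: ff_def gg_def)
  have Dn: "\<exists>x. x \<in> A \<and> (\<exists>k. x \<in> F k) \<and> ff x = n \<and> gg x = n" for n
  proof -
    define ps where "ps = Q n # map P [0..<n]"
    define qs where "qs = P n # map Q [0..<n]"
    have "\<exists>x. (\<forall>s\<in>set ps. x \<in> s) \<and> (\<forall>s\<in>set qs. x \<notin> s)"
    proof (rule indep[OF free])
      show "set ps \<subseteq> S" unfolding ps_def P_def Q_def using eS by auto
      show "set qs \<subseteq> S" unfolding qs_def P_def Q_def using eS by auto
      show "ps \<noteq> []" unfolding ps_def by simp
      show "qs \<noteq> []" unfolding qs_def by simp
      show "set ps \<inter> set qs = {}"
      proof (rule ccontr)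
        assume "set ps \<inter> set qs \<noteq> {}"
        then obtain s where s: "s \<in> set ps" "s \<in> set qs" by blast
        have "\<exists>u. s = e u \<and> (u = b n \<or> (\<exists>i<n. u = a i))"
          using s(1) unfolding ps_def P_def Q_def by (auto 0 4)
        then obtain u where u: "s = e u" "u = b n \<or> (\<exists>i<n. u = a i)" by blast
        have "\<exists>v. s = e v \<and> (v = a n \<or> (\<exists>j<n. v = b j))"
          using s(2) unfolding qs_def P_def Q_def by (auto 0 4)
        then obtain v where v: "s = e v" "v = a n \<or> (\<exists>j<n. v = b j)" by blast
        have "u = v" using u(1) v(1) inj_e by simp
        thus False using u(2) v(2) ab amono bmono by (metis less_irrefl)
      qed
    qed
    then obtain x where x1: "x \<in> Q n" and x2: "\<And>i. i < n \<Longrightarrow> x \<in> P i"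
      and x3: "x \<notin> P n" and x4: "\<And>j. j < n \<Longrightarrow> x \<notin> Q j"
      unfolding ps_def qs_def by auto
    have xA: "x \<in> A" using x1 eA unfolding Q_def by blast
    have xF: "x \<in> F n" unfolding F_def using x1 by auto
    have "ff x \<le> n" unfolding ff_def using xF by (rule Least_le)
    moreover have "\<not> ff x < n"
    proof
      assume lt: "ff x < n"
      have "x \<in> F (ff x)" unfolding ff_def using xF by (rule LeastI)
      then obtain j where "j \<le> ff x" "x \<in> Q j" unfolding F_def by auto
      thus False using x4 lt by simp
    qed
    ultimately have ffx: "ff x = n" by simp
    have nG: "x \<notin> G (Suc n)" unfolding G_def using x3 by auto
    have "gg x \<le> n" unfolding gg_def using nG by (rule Least_le)
    moreover have "\<not> gg x < n"
    proof
      assume lt: "gg x < n"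
      have "x \<notin> G (Suc (gg x))" unfolding gg_def using nG by (rule LeastI)
      moreover have "x \<in> G (Suc (gg x))" unfolding G_def using xA x2 lt by auto
      ultimately show False by simp
    qed
    ultimately have "gg x = n" by simp
    thus ?thesis using xA xF ffx by blast
  qed
  then obtain d where d: "\<And>n. d n \<in> A \<and> (\<exists>k. d n \<in> F k) \<and> ff (d n) = n \<and> gg (d n) = n" by metis
  have hd: "d n \<in> h X \<longleftrightarrow> n \<in> X" for n X unfolding h_def using d[of n] by auto
  have hord: "X \<subseteq> Y \<longleftrightarrow> h X \<subseteq> h Y" for X Y
  proof
    assume "X \<subseteq> Y" thus "h X \<subseteq> h Y" unfolding h_def by auto
  next
    assume "h X \<subseteq> h Y" thus "X \<subseteq> Y" using hd by blast
  qed
  have inj_h: "inj h"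
  proof (rule injI)
    fix X Y assume "h X = h Y" thus "X = Y" using hord by (metis subset_antisym order_refl)
  qed
  define L where "L = range h"
  have hU: "\<Union>(h ` XX) = h (\<Union>XX)" if "XX \<noteq> {}" for XX
    unfolding h_def using that by blast
  have hI: "\<Inter>(h ` XX) = h (\<Inter>XX)" if "XX \<noteq> {}" for XX
    unfolding h_def using that by blast
  have csl: "complete_sublattice W L"
    unfolding complete_sublattice_def
  proof (intro conjI allI impI)
    show "L \<subseteq> W" unfolding L_def using hW by blast
    fix FF assume FF: "FF \<subseteq> L \<and> FF \<noteq> {}"
    define XX where "XX = {X. h X \<in> FF}"
    have FFe: "FF = h ` XX" unfolding XX_def using FF L_def by blast
    have "XX \<noteq> {}" using FF FFe by blast
    show "\<Union>FF \<in> L" unfolding FFe hU[OF \<open>XX \<noteq> {}\<close>] L_def by simp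
    show "\<Inter>FF \<in> L" unfolding FFe hI[OF \<open>XX \<noteq> {}\<close>] L_def by simp
  qed
  have bijh: "bij_betw h UNIV L" unfolding L_def using inj_h by (simp add: bij_betw_def)
  define r2n where "r2n r = to_nat ` {q::rat. of_rat q < r}" for r :: real
  have inj_r2n: "inj r2n" unfolding r2n_def[abs_def] by (rule real_to_natset_inj)
  have "inj (h \<circ> r2n)" using inj_h inj_r2n by (simp add: inj_compose)
  moreover have "range (h \<circ> r2n) \<subseteq> W" using hW by auto
  ultimately show ?thesis using csl bijh hord by blast
qed


end
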